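(* Skeptic can weakly force the event \[ A_3:=\Bigl\{\xi:\ \limsup_{n\to\infty}s_n=\infty\ \text{and}\ \liminf_{n\to\infty}s_n=-\infty\Bigr\}. \]
   Context: Fair-coin game: in rounds $n=1,2,\dots$ Skeptic announces $M_n\in\mathbb{R}$ (depending only on $x_1,\dots,x_{n-1}$), then Reality announces $x_n\in\{-1,1\}$. A path is an infinite sequence $\xi=x_1x_2\cdots\in\{-1,1\}^{\mathbb{N}}$, and $\Omega$ is the set of paths. We write $s_n:=x_1+\cdots+x_n$, with $s_0=0$. The capital process of a strategy with zero initial capital is $\mathcal{K}^{\mathcal{P}}_n=\sum_{k=1}^nM_kx_k$. Skeptic weakly forces $E\subseteq\Omega$ if some strategy $\mathcal{P}$ has $\mathcal{K}^{\mathcal{P}}_n(\xi)\ge-1$ for all $\xi\in\Omega$ and $n\ge0$, and $\limsup_n\mathcal{K}^{\mathcal{P}}_n(\xi)=\infty$ for every $\xi\notin E$. *)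

theory Defs
  imports Complex_Main "HOL-Library.Extended_Real" "HOL-Library.Liminf_Limsup"
begin

text \<open>Paths are 0-indexed: the move x_(k+1) of Reality is xi k.\<close>
definition Omega :: "(nat \<Rightarrow> int) set" where
  "Omega = {xi. \<forall>n. xi n \<in> {-1, 1}}"

definition prefix :: "(nat \<Rightarrow> int) \<Rightarrow> nat \<Rightarrow> int list" where
  "prefix xi n = map xi [0..<n]"

definition S :: "(nat \<Rightarrow> int) \<Rightarrow> nat \<Rightarrow> int" where
  "S xi n = (\<Sum>k<n. xi k)"

text \<open>A strategy maps the history x_1..x_(n-1) to the move M_n.
  Capital with zero initial capital: sum over k=1..n of M_k x_k.\<close>
definition capital :: "(int list \<Rightarrow> real) \<Rightarrow> (nat \<Rightarrow> int) \<Rightarrow> nat \<Rightarrow> real" where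
  "capital P xi n = (\<Sum>k<n. P (prefix xi k) * real_of_int (xi k))"

definition weakly_forces :: "(nat \<Rightarrow> int) set \<Rightarrow> bool" where
  "weakly_forces E \<longleftrightarrow>
     (\<exists>P. (\<forall>xi\<in>Omega. \<forall>n. capital P xi n \<ge> -1) \<and>
          (\<forall>xi\<in>Omega - E. limsup (\<lambda>n. ereal (capital P xi n)) = \<infinity>))"

definition A3 :: "(nat \<Rightarrow> int) set" where
  "A3 = {xi\<in>Omega. limsup (\<lambda>n. ereal (real_of_int (S xi n))) = \<infinity> \<and>
                    liminf (\<lambda>n. ereal (real_of_int (S xi n))) = -\<infinity>}"

end

theory Submission imports Defs begin

lemma limsup_inf:
  assumes "\<And>B N. \<exists>n\<ge>N. f n > B"
  shows "limsup (\<lambda>n. ereal (f n)) = \<infinity>"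
proof -
  have "(SUP m\<in>{N..}. ereal (f m)) = \<infinity>" for N
  proof -
    have "\<exists>i\<in>{N..}. x < ereal (f i)" if xx: "x < \<infinity>" for x
    proof -
      obtain B where "x \<le> ereal B" using xx
        by (cases x) auto
      then show ?thesis using assms[rule_format, of N B]
        by (metis atLeast_iff less_ereal.simps(1) order.strict_trans1)
    qed
    then show ?thesis by (simp add: top_ereal_def[symmetric])
  qed
  then show ?thesis by (simp add: limsup_INF_SUP)
qed

lemma liminf_minf:
  assumes "\<And>B N. \<exists>n\<ge>N. f n < B"
  shows "liminf (\<lambda>n. ereal (f n)) = -\<infinity>"
proof -
  have "(INF m\<in>{N..}. ereal (f m)) = -\<infinity>" for N
  proof -
    have "\<exists>i\<in>{N..}. ereal (f i) < x" if xx: "x > -\<infinity>" for x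
    proof -
      obtain B where "x \<ge> ereal B" using xx
        by (cases x) auto
      then show ?thesis using assms[rule_format, of N B]
        by (metis atLeast_iff less_ereal.simps(1) order.strict_trans2)
    qed
    then show ?thesis by (simp add: bot_ereal_def[symmetric])
  qed
  then show ?thesis by (simp add: liminf_SUP_INF)
qed


fun stp :: "int \<times> int \<times> int \<Rightarrow> int \<Rightarrow> int \<times> int \<times> int" where
  "stp (s, m, X) x = (s + x, min m (s + x), max X (s + x))"

definition st :: "int list \<Rightarrow> int \<times> int \<times> int" where
  "st h = foldl stp (0, 0, 0) h"

lemma st_Nil [simp]: "st [] = (0, 0, 0)"
  by (simp add: st_def)

lemma st_snoc [simp]: "st (h @ [x]) = stp (st h) x"
  by (simp add: st_def)

lemma st_inv: "st h = (s, m, X) \<Longrightarrow> m \<le> s \<and> s \<le> X \<and> m \<le> 0 \<and> 0 \<le> X"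
proof (induction h arbitrary: s m X rule: rev_induct)
  case Nil
  then show ?case by simp
next
  case (snoc x h)
  obtain s0 m0 X0 where e: "st h = (s0, m0, X0)" by (cases "st h") auto
  then show ?case using snoc.IH[OF e] snoc.prems by auto
qed

definition T1 :: "int list \<Rightarrow> real" where
  "T1 h = (case st h of (s, m, X) \<Rightarrow> (1/2) ^ nat (- m) * (1 + real_of_int (s - m) / 2))"

definition T3 :: "int list \<Rightarrow> real" where
  "T3 h = (case st h of (s, m, X) \<Rightarrow>
     (1/2) ^ nat (X - m) + ((1/2) ^ nat (X - m))^2 / 4 *
       (real (length h) + real_of_int ((s - m) * (X - s))))"

lemma T1_nonneg: "T1 h \<ge> 0"
proof -
  obtain s m X where e: "st h = (s, m, X)" by (cases "st h") auto
  show ?thesis using st_inv[OF e] by (simp add: T1_def e)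
qed

lemma T3_nonneg: "T3 h \<ge> 0"
proof -
  obtain s m X where e: "st h = (s, m, X)" by (cases "st h") auto
  show ?thesis using st_inv[OF e] by (simp add: T3_def e)
qed

lemma T1_super: "T1 (h @ [1]) + T1 (h @ [-1]) \<le> 2 * T1 h"
proof -
  obtain s m X where e: "st h = (s, m, X)" by (cases "st h") auto
  note i = st_inv[OF e]
  show ?thesis
  proof (cases "s = m")
    case True
    have n: "nat (- (m - 1)) = Suc (nat (- m))" "nat (1 - m) = Suc (nat (- m))" using i by auto
    show ?thesis using i True by (simp add: T1_def e n)
  next
    case False
    then have "m < s" using i by simp
    then have "min m (s + 1) = m" "min m (s - 1) = m" by auto
    then have "T1 (h @ [1]) + T1 (h @ [-1]) = (1/2) ^ nat (- m) * ((1 + real_of_int (s + 1 - m) / 2) + (1 + real_of_int (s - 1 - m) / 2))"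
      by (simp add: T1_def e distrib_left)
    also have "\<dots> = 2 * T1 h" by (simp add: T1_def e field_simps)
    finally show ?thesis by simp
  qed
qed

lemma half_pow_bound: "(1/2::real) ^ k * (4 * real k + 1) \<le> 8"
proof -
  have "real k < 2 ^ k" using less_exp[of k] by (metis of_nat_less_iff of_nat_numeral of_nat_power)
  moreover have "(1::real) \<le> 2 ^ k" by simp
  ultimately have "4 * real k + 1 \<le> 8 * 2 ^ k" by linarith
  then show ?thesis by (simp add: power_one_over field_simps)
qed

lemma key_ineq:
  fixes x n r :: real
  assumes "x \<ge> 0" "n \<ge> 0" "x * (4 * r + 1) \<le> 8"
  shows "x + x^2/4*(n+r) + (x/2 + (x/2)^2/4*(n+1)) \<le> 2*(x + x^2/4*n)"
proof -
  have a: "x*x*(4*r+1) \<le> 8*x" using mult_left_mono[OF assms(3) assms(1)] by (simp add: algebra_simps)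
  have b: "x*x*n \<ge> 0" using assms by simp
  have "2*(x + x^2/4*n) - (x + x^2/4*(n+r) + (x/2 + (x/2)^2/4*(n+1)))
     = (8*x - x*x*(4*r+1))/16 + x*x*n*(3/16)"
    by (simp add: power2_eq_square field_simps)
  moreover have "0 \<le> (8*x - x*x*(4*r+1))/16 + x*x*n*(3/16)" using a b by simp
  ultimately have "0 \<le> 2*(x + x^2/4*n) - (x + x^2/4*(n+r) + (x/2 + (x/2)^2/4*(n+1)))" by simp
  then show ?thesis by simp
qed

lemma T3_super: "T3 (h @ [1]) + T3 (h @ [-1]) \<le> 2 * T3 h"
proof -
  obtain s m X where e: "st h = (s, m, X)" by (cases "st h") auto
  note i = st_inv[OF e]
  define x :: real where "x = (1/2) ^ nat (X - m)"
  define n where "n = real (length h)"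
  have x0: "x \<ge> 0" by (simp add: x_def)
  have n0: "n \<ge> 0" by (simp add: n_def)
  have xk: "x * (4 * real_of_int (X - m) + 1) \<le> 8"
    using half_pow_bound[of "nat (X - m)"] i by (simp add: x_def)
  have h0: "T3 h = x + x^2/4 * (n + real_of_int ((s - m) * (X - s)))"
    by (simp add: T3_def e x_def n_def)
  show ?thesis
  proof (cases "s = m")
    case sm: True
    show ?thesis
    proof (cases "s = X")
      case True
      then have "s = 0" "m = 0" "X = 0" using sm i by auto
      then show ?thesis by (simp add: T3_def e power2_eq_square field_simps)
    next
      case False
      then have mX: "m < X" using sm i by auto
      have nn: "nat (X - (m - 1)) = Suc (nat (X - m))" using mX by auto
      have su: "st (h @ [1]) = (m + 1, m, X)" using sm mX e by simp
      have sd: "st (h @ [-1]) = (m - 1, m - 1, X)" using sm mX e by simp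
      have "T3 (h @ [1]) = x + x^2/4 * (n + 1 + real_of_int ((m + 1 - m) * (X - (m + 1))))"
        unfolding T3_def su by (simp add: x_def n_def)
      also have "real_of_int ((m + 1 - m) * (X - (m + 1))) = real_of_int (X - m) - 1" by simp
      finally have u: "T3 (h @ [1]) = x + x^2/4 * (n + real_of_int (X - m))" by simp
      have xh: "(1/2::real) ^ nat (X - (m - 1)) = x/2" by (simp add: nn x_def)
      have d: "T3 (h @ [-1]) = x/2 + (x/2)^2/4 * (n + 1)"
        unfolding T3_def sd prod.case xh by (simp add: n_def)
      have "T3 h = x + x^2/4 * n" using h0 sm by simp
      then show ?thesis using u d key_ineq[OF x0 n0 xk] by simp
    qed
  next
    case ms: False
    show ?thesis
    proof (cases "s = X")
      case True
      then have mX: "m < X" using ms i by auto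
      have nn: "nat (X + 1 - m) = Suc (nat (X - m))" using mX by auto
      have sd: "st (h @ [-1]) = (X - 1, m, X)" using True mX e by simp
      have su: "st (h @ [1]) = (X + 1, m, X + 1)" using True mX e by simp
      have "T3 (h @ [-1]) = x + x^2/4 * (n + 1 + real_of_int ((X - 1 - m) * (X - (X - 1))))"
        unfolding T3_def sd by (simp add: x_def n_def)
      also have "real_of_int ((X - 1 - m) * (X - (X - 1))) = real_of_int (X - m) - 1" by simp
      finally have d: "T3 (h @ [-1]) = x + x^2/4 * (n + real_of_int (X - m))" by simp
      have xh: "(1/2::real) ^ nat (X + 1 - m) = x/2" by (simp add: nn x_def)
      have u: "T3 (h @ [1]) = x/2 + (x/2)^2/4 * (n + 1)"
        unfolding T3_def su prod.case xh by (simp add: n_def)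
      have "T3 h = x + x^2/4 * n" using h0 True by simp
      then show ?thesis using u d key_ineq[OF x0 n0 xk] by simp
    next
      case False
      then have lt: "m < s" "s < X" using ms i by auto
      have su: "st (h @ [1]) = (s + 1, m, X)" using lt e by simp
      have sd: "st (h @ [-1]) = (s - 1, m, X)" using lt e by simp
      have u: "T3 (h @ [1]) = x + x^2/4 * (n + 1 + real_of_int ((s + 1 - m) * (X - (s + 1))))"
        unfolding T3_def su by (simp add: x_def n_def)
      have d: "T3 (h @ [-1]) = x + x^2/4 * (n + 1 + real_of_int ((s - 1 - m) * (X - (s - 1))))"
        unfolding T3_def sd by (simp add: x_def n_def)
      have "real_of_int ((s + 1 - m) * (X - (s + 1))) + real_of_int ((s - 1 - m) * (X - (s - 1)))
          = 2 * real_of_int ((s - m) * (X - s)) - 2"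
        by (simp add: algebra_simps)
      then show ?thesis unfolding u d h0 by (simp add: algebra_simps)
    qed
  qed
qed

definition Tt :: "int list \<Rightarrow> real" where
  "Tt h = (T1 h + T1 (map uminus h) + 2 * T3 h) / 4"

definition Pt :: "int list \<Rightarrow> real" where
  "Pt h = (Tt (h @ [1]) - Tt (h @ [-1])) / 2"

lemma Tt_super: "Tt (h @ [1]) + Tt (h @ [-1]) \<le> 2 * Tt h"
proof -
  have "T1 (map uminus h @ [-1]) + T1 (map uminus h @ [- (-1)]) \<le> 2 * T1 (map uminus h)"
    using T1_super[of "map uminus h"] by simp
  then show ?thesis using T1_super[of h] T3_super[of h] by (simp add: Tt_def field_simps)
qed

lemma Tt_nonneg: "Tt h \<ge> 0"
  using T1_nonneg[of h] T1_nonneg[of "map uminus h"] T3_nonneg[of h] by (simp add: Tt_def)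

lemma Tt_Nil: "Tt [] = 1"
  by (simp add: Tt_def T1_def T3_def)

lemma prefix_Suc: "prefix xi (Suc n) = prefix xi n @ [xi n]"
  by (simp add: prefix_def)

lemma capital_Suc: "capital P xi (Suc n) = capital P xi n + P (prefix xi n) * real_of_int (xi n)"
  by (simp add: capital_def)

lemma S_Suc: "S xi (Suc n) = S xi n + xi n"
  by (simp add: S_def)

lemma capital_ge: assumes "xi \<in> Omega" shows "capital Pt xi n \<ge> Tt (prefix xi n) - 1"
proof (induction n)
  case 0
  then show ?case by (simp add: capital_def prefix_def Tt_Nil)
next
  case (Suc n)
  have x: "xi n = 1 \<or> xi n = -1" using assms by (auto simp: Omega_def)
  let ?h = "prefix xi n"
  have "Tt (?h @ [xi n]) \<le> Tt ?h + Pt ?h * real_of_int (xi n)"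
    using x Tt_super[of ?h] by (auto simp: Pt_def field_simps)
  then show ?case using Suc by (simp add: capital_Suc prefix_Suc)
qed

lemma S_abs: assumes "xi \<in> Omega" shows "\<bar>S xi n\<bar> \<le> int n"
proof (induction n)
  case 0
  then show ?case by (simp add: S_def)
next
  case (Suc n)
  have x: "xi n = 1 \<or> xi n = -1" using assms by (auto simp: Omega_def)
  then show ?case using Suc by (auto simp: S_Suc)
qed

lemma st_prefix:
  "fst (st (prefix xi n)) = S xi n \<and>
   ((\<forall>k. lo \<le> S xi k) \<longrightarrow> lo \<le> fst (snd (st (prefix xi n)))) \<and>
   ((\<forall>k. S xi k \<le> hi) \<longrightarrow> snd (snd (st (prefix xi n))) \<le> hi)"
proof (induction n)
  case 0
  have "S xi 0 = 0" by (simp add: S_def)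
  then show ?case by (auto simp: prefix_def) (metis, metis)
next
  case (Suc n)
  obtain s m X where e: "st (prefix xi n) = (s, m, X)" by (cases "st (prefix xi n)") auto
  have a: "lo \<le> S xi n + xi n" if "\<forall>k. lo \<le> S xi k"
    using that[rule_format, of "Suc n"] by (simp add: S_Suc)
  have b: "S xi n + xi n \<le> hi" if "\<forall>k. S xi k \<le> hi"
    using that[rule_format, of "Suc n"] by (simp add: S_Suc)
  show ?case using Suc e a b by (auto simp: prefix_Suc S_Suc)
qed

lemma T1_grow:
  assumes "\<forall>k. lo \<le> S xi k"
  shows "T1 (prefix xi n) \<ge> (1/2) ^ nat (- lo) * real_of_int (S xi n) / 2"
proof -
  obtain s m X where e: "st (prefix xi n) = (s, m, X)" by (cases "st (prefix xi n)") auto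
  note i = st_inv[OF e]
  have sS: "s = S xi n" and lom: "lo \<le> m" using st_prefix[of xi n lo] assms e by auto
  have f1: "(1/2::real) ^ nat (- lo) \<le> (1/2) ^ nat (- m)"
    by (rule power_decreasing) (use lom in auto)
  have f2: "real_of_int s / 2 \<le> 1 + real_of_int (s - m) / 2" using i by (simp add: field_simps)
  have f3: "0 \<le> 1 + real_of_int (s - m) / 2" using i by simp
  have "(1/2::real) ^ nat (- lo) * (real_of_int s / 2) \<le> (1/2) ^ nat (- m) * (1 + real_of_int (s - m) / 2)"
  proof (cases "s \<ge> 0")
    case True
    show ?thesis by (rule mult_mono) (use f1 f2 f3 True in auto)
  next
    case False
    have "(1/2::real) ^ nat (- lo) * (real_of_int s / 2) \<le> 0"
      using False by (simp add: mult_nonneg_nonpos)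
    also have "0 \<le> (1/2::real) ^ nat (- m) * (1 + real_of_int (s - m) / 2)"
      using f3 by simp
    finally show ?thesis .
  qed
  then show ?thesis by (simp add: T1_def e sS)
qed

lemma T3_grow:
  assumes "\<forall>k. lo \<le> S xi k" "\<forall>k. S xi k \<le> hi"
  shows "T3 (prefix xi n) \<ge> ((1/2) ^ nat (hi - lo))^2 / 4 * real n"
proof -
  obtain s m X where e: "st (prefix xi n) = (s, m, X)" by (cases "st (prefix xi n)") auto
  note i = st_inv[OF e]
  have lom: "lo \<le> m" and Xh: "X \<le> hi" using st_prefix[of xi n lo hi] assms e by auto
  have "(1/2::real) ^ nat (hi - lo) \<le> (1/2) ^ nat (X - m)"
    by (rule power_decreasing) (use lom Xh in auto)
  then have p: "((1/2::real) ^ nat (hi - lo))^2 \<le> ((1/2) ^ nat (X - m))^2"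
    by (rule power_mono) simp
  have g: "0 \<le> real_of_int ((s - m) * (X - s))" using i by simp
  have "((1/2::real) ^ nat (hi - lo))^2 / 4 * real n \<le> ((1/2) ^ nat (X - m))^2 / 4 * real n"
    using p by (simp add: mult_right_mono divide_right_mono)
  also have "\<dots> \<le> ((1/2) ^ nat (X - m))^2 / 4 * (real n + real_of_int ((s - m) * (X - s)))"
    using g by (simp add: mult_left_mono)
  also have "\<dots> \<le> T3 (prefix xi n)"
    unfolding T3_def e by (simp add: prefix_def)
  finally show ?thesis .
qed

lemma neg_Omega: "xi \<in> Omega \<Longrightarrow> (\<lambda>k. - xi k) \<in> Omega"
  by (auto simp: Omega_def)

lemma neg_prefix: "map uminus (prefix xi n) = prefix (\<lambda>k. - xi k) n"
  by (simp add: prefix_def)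

lemma neg_S: "S (\<lambda>k. - xi k) n = - S xi n"
  by (simp add: S_def sum_negf)

lemma freq_S:
  assumes "xi \<in> Omega" "\<forall>hi. \<exists>k. S xi k > hi"
  shows "\<exists>n\<ge>N. S xi n > C"
proof -
  obtain k where k: "S xi k > max C (int N)" using assms(2) by blast
  have "\<bar>S xi k\<bar> \<le> int k" by (rule S_abs[OF assms(1)])
  then have "k \<ge> N" using k by linarith
  then show ?thesis using k by auto
qed

lemma bounded_cases:
  assumes "xi \<in> Omega" "xi \<notin> A3"
  shows "(\<exists>hi. \<forall>k. S xi k \<le> hi) \<or> (\<exists>lo. \<forall>k. lo \<le> S xi k)"
proof (rule ccontr)
  assume "\<not> ?thesis"
  then have u: "\<forall>hi. \<exists>k. S xi k > hi" and l: "\<forall>lo. \<exists>k. S xi k < lo"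
    by (auto simp: not_le)
  have l': "\<forall>hi. \<exists>k. S (\<lambda>k. - xi k) k > hi"
  proof
    fix hi obtain k where "S xi k < - hi" using l by blast
    then have "S (\<lambda>k. - xi k) k > hi" by (simp add: neg_S)
    then show "\<exists>k. S (\<lambda>k. - xi k) k > hi" by blast
  qed
  have "limsup (\<lambda>n. ereal (real_of_int (S xi n))) = \<infinity>"
  proof (rule limsup_inf)
    fix B :: real and N
    obtain n where "n \<ge> N" "S xi n > \<lceil>B\<rceil>" using freq_S[OF assms(1) u] by blast
    then have "n \<ge> N" "B \<le> real_of_int (S xi n) - 1" by (auto simp: ceiling_less_iff)
    then have "n \<ge> N" "real_of_int (S xi n) > B" by auto
    then show "\<exists>n\<ge>N. real_of_int (S xi n) > B" by blast
  qed
  moreover have "liminf (\<lambda>n. ereal (real_of_int (S xi n))) = -\<infinity>"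
  proof (rule liminf_minf)
    fix B :: real and N
    obtain n where "n \<ge> N" "S (\<lambda>k. - xi k) n > \<lceil>- B\<rceil>" using freq_S[OF neg_Omega[OF assms(1)] l'] by blast
    then have "n \<ge> N" "- S xi n > \<lceil>- B\<rceil>" by (auto simp: neg_S)
    then show "\<exists>n\<ge>N. real_of_int (S xi n) < B"
      by (smt (verit, best) le_of_int_ceiling of_int_less_iff of_int_minus)
  qed
  ultimately show False using assms by (simp add: A3_def)
qed

lemma caseB:
  assumes "xi \<in> Omega" "\<forall>k. lo \<le> S xi k" "\<forall>hi. \<exists>k. S xi k > hi"
  shows "\<exists>n\<ge>N. T1 (prefix xi n) / 4 - 1 > B"
proof -
  define c :: real where "c = (1/2) ^ nat (- lo) / 2"
  have c0: "c > 0" by (simp add: c_def)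
  obtain n where n: "n \<ge> N" "S xi n > \<lceil>4 * (B + 1) / c\<rceil>" using freq_S[OF assms(1,3)] by blast
  then have "4 * (B + 1) / c \<le> real_of_int (S xi n) - 1" by (simp add: ceiling_less_iff)
  then have "4 * (B + 1) / c < real_of_int (S xi n)" by simp
  then have "4 * (B + 1) < c * real_of_int (S xi n)" using c0 by (simp add: field_simps)
  moreover have "T1 (prefix xi n) \<ge> c * real_of_int (S xi n)"
    using T1_grow[OF assms(2), of n] by (simp add: c_def)
  ultimately show ?thesis using n(1) by (intro exI[of _ n]) auto
qed

lemma caseA:
  assumes "\<forall>k. lo \<le> S xi k" "\<forall>k. S xi k \<le> hi"
  shows "\<exists>n\<ge>N. T3 (prefix xi n) / 2 - 1 > B"
proof -
  define c :: real where "c = ((1/2) ^ nat (hi - lo))^2 / 4"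
  have c0: "c > 0" by (simp add: c_def)
  define n where "n = max N (nat \<lceil>2 * (B + 1) / c\<rceil> + 1)"
  have "2 * (B + 1) / c < real n" unfolding n_def by linarith
  then have "2 * (B + 1) < c * real n" using c0 by (simp add: field_simps)
  moreover have "T3 (prefix xi n) \<ge> c * real n"
    using T3_grow[OF assms, of n] by (simp add: c_def)
  ultimately show ?thesis by (intro exI[of _ n]) (auto simp: n_def)
qed

theorem theorem3:
  shows "weakly_forces A3"
  unfolding weakly_forces_def
proof (intro exI[of _ Pt] conjI ballI allI)
  fix xi n assume "xi \<in> Omega"
  then show "capital Pt xi n \<ge> -1" using capital_ge[of xi n] Tt_nonneg[of "prefix xi n"] by linarith
next
  fix xi assume xi: "xi \<in> Omega - A3"
  then have om: "xi \<in> Omega" and nA: "xi \<notin> A3" by auto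
  have cT: "capital Pt xi n \<ge> T1 (prefix xi n) / 4 - 1 \<and>
            capital Pt xi n \<ge> T1 (prefix (\<lambda>k. - xi k) n) / 4 - 1 \<and>
            capital Pt xi n \<ge> T3 (prefix xi n) / 2 - 1" for n
    using capital_ge[OF om, of n] T1_nonneg[of "prefix xi n"] T1_nonneg[of "prefix (\<lambda>k. - xi k) n"]
      T3_nonneg[of "prefix xi n"]
    by (simp add: Tt_def neg_prefix field_simps)
  show "limsup (\<lambda>n. ereal (capital Pt xi n)) = \<infinity>"
  proof (rule limsup_inf)
    fix B :: real and N :: nat
    have "\<exists>n\<ge>N. T1 (prefix xi n) / 4 - 1 > B \<or> T1 (prefix (\<lambda>k. - xi k) n) / 4 - 1 > B
                 \<or> T3 (prefix xi n) / 2 - 1 > B"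
    proof (cases "(\<exists>hi. \<forall>k. S xi k \<le> hi) \<and> (\<exists>lo. \<forall>k. lo \<le> S xi k)")
      case True
      then obtain hi lo where "\<forall>k. S xi k \<le> hi" "\<forall>k. lo \<le> S xi k" by blast
      then show ?thesis using caseA[of lo xi hi N B] by blast
    next
      case False
      show ?thesis
      proof (cases "\<exists>lo. \<forall>k. lo \<le> S xi k")
        case True
        then obtain lo where lo: "\<forall>k. lo \<le> S xi k" by blast
        have "\<forall>hi. \<exists>k. S xi k > hi" using False True by (auto simp: not_le)
        then show ?thesis using caseB[OF om lo, of N B] by blast
      next
        case nlo: False
        then obtain hi where hi: "\<forall>k. S xi k \<le> hi" using bounded_cases[OF om nA] by blast
        have lo': "\<forall>k. - hi \<le> S (\<lambda>k. - xi k) k" using hi by (simp add: neg_S)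
        have "\<forall>h. \<exists>k. S (\<lambda>k. - xi k) k > h"
        proof
          fix h
          obtain k where "S xi k < - h" using nlo by (auto simp: not_le)
          then have "S (\<lambda>k. - xi k) k > h" by (simp add: neg_S)
          then show "\<exists>k. S (\<lambda>k. - xi k) k > h" by blast
        qed
        then show ?thesis using caseB[OF neg_Omega[OF om] lo', of N B] by blast
      qed
    qed
    then show "\<exists>n\<ge>N. capital Pt xi n > B" using cT by (meson less_le_trans)
  qed
qed

end
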